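(* Fix $k\ge1$. For every $j\ge2$, $$q(j+1)-q(j)=\begin{cases}F_{2k}&\text{if the }(j-1)\text{th letter of }\mathcal S\text{ is }A,\\ F_{2k+1}&\text{if the }(j-1)\text{th letter of }\mathcal S\text{ is }B.\end{cases}$$
   Context: Fibonacci numbers: $F_1=F_2=1$, $F_{n+1}=F_n+F_{n-1}$ for $n\ge2$. Chung–Graham decomposition: every positive integer $n$ has a unique representation $n=\sum_{i\ge1}c_iF_{2i}$ with $c_i\in\{0,1,2\}$, only finitely many nonzero, such that whenever $c_i=c_j=2$ with $i<j$ there is $k$ with $i<k<j$ and $c_k=0$. Let $\mathcal{CG}(n)$ be the set of $F_{2i}$ with $c_i\neq0$. For $k\ge1$, $A_{2k}=\{n\ge1:\min\mathcal{CG}(n)=F_{2k}\}$, and $q(1)<q(2)<q(3)<\cdots$ denote the elements of $A_{2k}$ listed in increasing order. Golden string: define finite words over $\{A,B\}$ by $S_1=B$, $S_2=BA$, $S_n=S_{n-1}:S_{n-2}$ for $n\ge3$, where $:$ denotes concatenation; each $S_n$ is a prefix of $S_{n+1}$, and $\mathcal S$ is the infinite word having every $S_n$ as a prefix ($\mathcal S=BABBABABBABB\ldots$). Letters of $\mathcal S$ are indexed starting at $1$. *)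

theory Defs
  imports Main "HOL-Number_Theory.Fib" "HOL-Library.Infinite_Set"
begin

(* Fibonacci numbers: F_n = fib n (fib 1 = fib 2 = 1). *)

(* Chung-Graham representation of n: coefficient function c, with c i the
   coefficient of F_{2i} (i >= 1); c 0 = 0 encodes that indices start at 1. *)
definition is_CG_rep :: "nat \<Rightarrow> (nat \<Rightarrow> nat) \<Rightarrow> bool" where
  "is_CG_rep n c \<longleftrightarrow>
     c 0 = 0 \<and> (\<forall>i. c i \<le> 2) \<and> finite {i. c i \<noteq> 0} \<and>
     n = (\<Sum>i\<in>{i. c i \<noteq> 0}. c i * fib (2 * i)) \<and>
     (\<forall>i j. i < j \<and> c i = 2 \<and> c j = 2 \<longrightarrow> (\<exists>l. i < l \<and> l < j \<and> c l = 0))"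

definition CG_coeff :: "nat \<Rightarrow> nat \<Rightarrow> nat" where
  "CG_coeff n = (THE c. is_CG_rep n c)"

definition CG :: "nat \<Rightarrow> nat set" where
  "CG n = {fib (2 * i) | i. i \<ge> 1 \<and> CG_coeff n i \<noteq> 0}"

definition A2k :: "nat \<Rightarrow> nat set" where
  "A2k k = {n. n \<ge> 1 \<and> Min (CG n) = fib (2 * k)}"

definition q :: "nat \<Rightarrow> nat \<Rightarrow> nat" where
  "q k j = enumerate (A2k k) (j - 1)"

datatype letter = A | B

fun S :: "nat \<Rightarrow> letter list" where
  "S 0 = []"
| "S (Suc 0) = [B]"
| "S (Suc (Suc 0)) = [B, A]"
| "S (Suc (Suc (Suc n))) = S (Suc (Suc n)) @ S (Suc n)"

(* i-th letter (1-indexed) of the infinite golden string: read off from any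
   S_n long enough (each S_n is a prefix of S_{n+1}) *)
definition golden :: "nat \<Rightarrow> letter" where
  "golden i = S (LEAST n. i \<le> length (S n)) ! (i - 1)"

end

theory Submission
  imports Defs
begin


definition valid :: "nat \<Rightarrow> (nat \<Rightarrow> nat) \<Rightarrow> bool" where
  "valid m c \<longleftrightarrow> c 0 = 0 \<and> (\<forall>i. c i \<le> 2) \<and> (\<forall>i>m. c i = 0) \<and>
     (\<forall>i j. i < j \<and> c i = 2 \<and> c j = 2 \<longrightarrow> (\<exists>l. i < l \<and> l < j \<and> c l = 0))"

definition restr :: "nat \<Rightarrow> (nat \<Rightarrow> nat) \<Rightarrow> bool" where
  "restr m c \<longleftrightarrow> (\<forall>i. c i = 2 \<longrightarrow> (\<exists>l. i < l \<and> l \<le> m \<and> c l = 0))"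

definition val :: "nat \<Rightarrow> (nat \<Rightarrow> nat) \<Rightarrow> nat" where
  "val m c = (\<Sum>i=1..m. c i * fib (2*i))"

lemma fib_a: "fib (2 * Suc m + 2) = fib (2*m+2) + fib (2*m+2) + fib (2*m+1)"
proof -
  have e1: "fib (Suc(Suc(2*m+2))) = fib (Suc(2*m+2)) + fib (2*m+2)" by (rule fib.simps(3))
  have e2: "fib (Suc(Suc(2*m+1))) = fib (Suc(2*m+1)) + fib (2*m+1)" by (rule fib.simps(3))
  have a1: "fib (2 * Suc m + 2) = fib (Suc(Suc(2*m+2)))" by (rule arg_cong[where f=fib]) simp
  have a2: "fib (Suc(Suc(2*m+1))) = fib (Suc(2*m+2))" by (rule arg_cong[where f=fib]) simp
  have a3: "fib (Suc(2*m+1)) = fib (2*m+2)" by (rule arg_cong[where f=fib]) simp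
  show ?thesis using e1 e2 a1 a2 a3 by linarith
qed

lemma fib_b: "fib (2 * Suc m + 1) = fib (2*m+2) + fib (2*m+1)"
proof -
  have e2: "fib (Suc(Suc(2*m+1))) = fib (Suc(2*m+1)) + fib (2*m+1)" by (rule fib.simps(3))
  have a2: "fib (2 * Suc m + 1) = fib (Suc(Suc(2*m+1)))" by (rule arg_cong[where f=fib]) simp
  have a3: "fib (Suc(2*m+1)) = fib (2*m+2)" by (rule arg_cong[where f=fib]) simp
  show ?thesis using e2 a2 a3 by linarith
qed

lemma fib_c: "fib (2 * Suc m) = fib (2*m+2)" by simp

lemma val_Suc: "val (Suc m) c = val m c + c (Suc m) * fib (2*m+2)"
  unfolding val_def by simp

lemma val_cong: "(\<And>i. 1 \<le> i \<Longrightarrow> i \<le> m \<Longrightarrow> c i = d i) \<Longrightarrow> val m c = val m d"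
  unfolding val_def by (rule sum.cong) auto

lemma val_upd: "val m (c(Suc m := v)) = val m c"
  by (rule val_cong) auto

lemma valid_low: "valid (Suc m) c \<Longrightarrow> valid m (c(Suc m := 0))"
  unfolding valid_def
proof (elim conjE, intro conjI allI impI)
  fix i assume "\<forall>i>Suc m. c i = 0" "m < i"
  then show "(c(Suc m := 0)) i = 0" by (cases "i = Suc m") auto
next
  fix i j assume H: "\<forall>i j. i < j \<and> c i = 2 \<and> c j = 2 \<longrightarrow> (\<exists>l>i. l < j \<and> c l = 0)"
    and a: "i < j \<and> (c(Suc m := 0)) i = 2 \<and> (c(Suc m := 0)) j = 2"
  then have "c i = 2" "c j = 2" by (auto split: if_splits)
  then obtain l where "i < l" "l < j" "c l = 0" using H a by blast
  then show "\<exists>l>i. l < j \<and> (c(Suc m := 0)) l = 0" by (intro exI[of _ l]) auto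
qed auto

lemma valid_Suc: "valid m c \<Longrightarrow> valid (Suc m) c"
  unfolding valid_def by auto

lemma valid_Suc_val: "valid m c \<Longrightarrow> val (Suc m) c = val m c"
  unfolding valid_def by (simp add: val_Suc)

lemma valid_upd1: "valid m d \<Longrightarrow> valid (Suc m) (d(Suc m := 1))"
  unfolding valid_def
proof (elim conjE, intro conjI allI impI)
  fix i j assume H: "\<forall>i j. i < j \<and> d i = 2 \<and> d j = 2 \<longrightarrow> (\<exists>l>i. l < j \<and> d l = 0)"
    and Z: "\<forall>i>m. d i = 0"
    and a: "i < j \<and> (d(Suc m := 1)) i = 2 \<and> (d(Suc m := 1)) j = 2"
  have "i \<noteq> Suc m" "j \<noteq> Suc m" using a by auto
  then have di: "d i = 2" and dj: "d j = 2" using a by auto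
  then obtain l where l: "i < l" "l < j" "d l = 0" using H a by blast
  have "j \<le> m" using Z dj by (metis leI numeral_2_eq_2 nat.simps(3))
  then have "l \<noteq> Suc m" using l by simp
  then show "\<exists>l>i. l < j \<and> (d(Suc m := 1)) l = 0" using l by (intro exI[of _ l]) auto
qed auto

lemma valid_upd2: "valid m d \<Longrightarrow> restr m d \<Longrightarrow> valid (Suc m) (d(Suc m := 2))"
  unfolding valid_def
proof (elim conjE, intro conjI allI impI)
  fix i j assume H: "\<forall>i j. i < j \<and> d i = 2 \<and> d j = 2 \<longrightarrow> (\<exists>l>i. l < j \<and> d l = 0)"
    and R: "restr m d" and Z: "\<forall>i>m. d i = 0"
    and a: "i < j \<and> (d(Suc m := 2)) i = 2 \<and> (d(Suc m := 2)) j = 2"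
  have iS: "i \<noteq> Suc m"
  proof
    assume "i = Suc m"
    then have "j > Suc m" "j \<noteq> Suc m" using a by auto
    then show False using a Z by auto
  qed
  then have di: "d i = 2" using a by auto
  show "\<exists>l>i. l < j \<and> (d(Suc m := 2)) l = 0"
  proof (cases "j = Suc m")
    case True
    obtain l where "i < l" "l \<le> m" "d l = 0" using R di unfolding restr_def by blast
    then show ?thesis using True by (intro exI[of _ l]) auto
  next
    case False
    then have "d j = 2" using a by auto
    then obtain l where l: "i < l" "l < j" "d l = 0" using H a di by blast
    have "l \<noteq> Suc m"
    proof
      assume "l = Suc m"
      then have "j > Suc m" using l by simp
      then show False using Z \<open>d j = 2\<close> by auto
    qed
    then show ?thesis using l by (intro exI[of _ l]) auto
  qed
qed auto

lemma restr_upd1: "valid m d \<Longrightarrow> restr m d \<Longrightarrow> restr (Suc m) (d(Suc m := 1))"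
  unfolding restr_def
proof (intro allI impI)
  fix i assume R: "\<forall>i. d i = 2 \<longrightarrow> (\<exists>l>i. l \<le> m \<and> d l = 0)" and a: "(d(Suc m := 1)) i = 2"
  then have "d i = 2" by (auto split: if_splits)
  then obtain l where "i < l" "l \<le> m" "d l = 0" using R by blast
  then show "\<exists>l>i. l \<le> Suc m \<and> (d(Suc m := 1)) l = 0" by (intro exI[of _ l]) auto
qed

lemma restr_0: "valid m d \<Longrightarrow> restr (Suc m) d"
  unfolding restr_def
proof (intro allI impI)
  fix i assume v: "valid m d" and a: "d i = 2"
  then have "\<not> i > m" unfolding valid_def by force
  moreover have "d (Suc m) = 0" using v unfolding valid_def by auto
  ultimately show "\<exists>l>i. l \<le> Suc m \<and> d l = 0" by (intro exI[of _ "Suc m"]) auto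
qed

lemma val_upd_Suc: "val (Suc m) (d(Suc m := v)) = val m d + v * fib (2*m+2)"
  by (simp add: val_Suc val_upd)

lemma bound: "valid m c \<Longrightarrow> val m c < fib (2*m+2) \<and> (restr m c \<longrightarrow> val m c < fib (2*m+1))"
proof (induction m arbitrary: c)
  case 0
  then show ?case by (simp add: val_def)
next
  case (Suc m)
  define c' where "c' = c(Suc m := 0)"
  have v': "valid m c'" using valid_low[OF Suc.prems] c'_def by simp
  have ve: "val (Suc m) c = val m c' + c (Suc m) * fib (2*m+2)"
    by (simp add: val_Suc c'_def val_upd)
  have IH: "val m c' < fib (2*m+2)" "restr m c' \<Longrightarrow> val m c' < fib (2*m+1)"
    using Suc.IH[OF v'] by auto
  have c2: "c (Suc m) \<le> 2" using Suc.prems unfolding valid_def by auto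
  have fa: "fib (2 * Suc m + 2) = fib (2*m+2) + fib (2*m+2) + fib (2*m+1)" by (rule fib_a)
  have fb: "fib (2 * Suc m + 1) = fib (2*m+2) + fib (2*m+1)" by (rule fib_b)
  have f1: "fib (2*m+1) \<le> fib (2*m+2)" by (simp add: fib_mono)
  consider "c (Suc m) = 0" | "c (Suc m) = 1" | "c (Suc m) = 2" using c2 by linarith
  then show ?case
  proof cases
    case 1
    then show ?thesis using ve IH(1) fa fb by simp
  next
    case 2
    have "restr m c'" if R: "restr (Suc m) c"
      unfolding restr_def
    proof (intro allI impI)
      fix i assume "c' i = 2"
      then have "c i = 2" "i \<noteq> Suc m" unfolding c'_def by (auto split: if_splits)
      then obtain l where l: "i < l" "l \<le> Suc m" "c l = 0" using R unfolding restr_def by blast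
      then have "l \<noteq> Suc m" using 2 by auto
      then show "\<exists>l>i. l \<le> m \<and> c' l = 0" using l unfolding c'_def by (intro exI[of _ l]) auto
    qed
    then show ?thesis using ve IH fa fb 2 by auto
  next
    case 3
    have "restr m c'"
      unfolding restr_def
    proof (intro allI impI)
      fix i assume "c' i = 2"
      then have ci: "c i = 2" and iS: "i \<noteq> Suc m" unfolding c'_def by (auto split: if_splits)
      have "\<not> i > Suc m" using Suc.prems ci unfolding valid_def by force
      then have "i < Suc m" using iS by simp
      then obtain l where l: "i < l" "l < Suc m" "c l = 0" using Suc.prems ci 3 unfolding valid_def by blast
      then show "\<exists>l>i. l \<le> m \<and> c' l = 0" unfolding c'_def by (intro exI[of _ l]) auto
    qed
    moreover have "\<not> restr (Suc m) c" using 3 unfolding restr_def by force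
    ultimately show ?thesis using ve IH fa fb 3 by auto
  qed
qed


lemma valid_zero: "valid 0 c \<Longrightarrow> c = (\<lambda>_. 0)"
  unfolding valid_def by (metis neq0_conv)

lemma uniq: "valid m c \<Longrightarrow> valid m d \<Longrightarrow> val m c = val m d \<Longrightarrow> c = d"
proof (induction m arbitrary: c d)
  case 0
  then show ?case using valid_zero by metis
next
  case (Suc m)
  define c' where "c' = c(Suc m := 0)"
  define d' where "d' = d(Suc m := 0)"
  have vc: "valid m c'" using valid_low[OF Suc.prems(1)] c'_def by simp
  have vd: "valid m d'" using valid_low[OF Suc.prems(2)] d'_def by simp
  have ec: "val (Suc m) c = val m c' + c (Suc m) * fib (2*m+2)"
    by (simp add: val_Suc c'_def val_upd)
  have ed: "val (Suc m) d = val m d' + d (Suc m) * fib (2*m+2)"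
    by (simp add: val_Suc d'_def val_upd)
  have bc: "val m c' < fib (2*m+2)" using bound[OF vc] by auto
  have bd: "val m d' < fib (2*m+2)" using bound[OF vd] by auto
  have c2: "c (Suc m) \<le> 2" "d (Suc m) \<le> 2" using Suc.prems unfolding valid_def by auto
  have eq: "val m c' + c (Suc m) * fib (2*m+2) = val m d' + d (Suc m) * fib (2*m+2)"
    using ec ed Suc.prems(3) by simp
  have same: "c (Suc m) = d (Suc m)"
  proof (rule ccontr)
    assume ne: "c (Suc m) \<noteq> d (Suc m)"
    show False
    proof (cases "c (Suc m) < d (Suc m)")
      case True
      then have "Suc (c (Suc m)) * fib (2*m+2) \<le> d (Suc m) * fib (2*m+2)"
        by (intro mult_le_mono1) simp
      then show False using eq bc bd by simp
    next
      case False
      then have "d (Suc m) < c (Suc m)" using ne by simp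
      then have "Suc (d (Suc m)) * fib (2*m+2) \<le> c (Suc m) * fib (2*m+2)"
        by (intro mult_le_mono1) simp
      then show False using eq bc bd by simp
    qed
  qed
  then have "val m c' = val m d'" using eq by simp
  then have "c' = d'" using Suc.IH vc vd by blast
  show ?case
  proof (rule ext)
    fix i
    show "c i = d i"
    proof (cases "i = Suc m")
      case True then show ?thesis using same by simp
    next
      case False then show ?thesis using fun_cong[OF \<open>c' = d'\<close>, of i] c'_def d'_def by simp
    qed
  qed
qed

lemma exist: "(\<forall>n < fib (2*m+2). \<exists>c. valid m c \<and> val m c = n) \<and>
   (\<forall>n < fib (2*m+1). \<exists>c. valid m c \<and> restr m c \<and> val m c = n)"
proof (induction m)
  case 0
  have v: "valid 0 (\<lambda>_. 0)" unfolding valid_def by simp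
  have r: "restr 0 (\<lambda>_. 0)" unfolding restr_def by simp
  have z: "val 0 (\<lambda>_. 0) = 0" unfolding val_def by simp
  show ?case using v r z by auto
next
  case (Suc m)
  have fa: "fib (2 * Suc m + 2) = fib (2*m+2) + fib (2*m+2) + fib (2*m+1)" by (rule fib_a)
  have fb: "fib (2 * Suc m + 1) = fib (2*m+2) + fib (2*m+1)" by (rule fib_b)
  have P1: "\<exists>c. valid (Suc m) c \<and> val (Suc m) c = n" if n: "n < fib (2 * Suc m + 2)" for n
  proof -
    consider "n < fib (2*m+2)" | "fib (2*m+2) \<le> n" "n < 2*fib (2*m+2)" | "2*fib (2*m+2) \<le> n"
      by linarith
    then show ?thesis
    proof cases
      case 1
      then obtain c where c: "valid m c" "val m c = n" using Suc.IH by blast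
      show ?thesis using c valid_Suc[OF c(1)] valid_Suc_val[OF c(1)] by auto
    next
      case 2
      then have "n - fib (2*m+2) < fib (2*m+2)" by linarith
      then obtain d where d: "valid m d" "val m d = n - fib (2*m+2)" using Suc.IH by blast
      show ?thesis
        apply (rule exI[of _ "d(Suc m := 1)"])
        using valid_upd1[OF d(1)] val_upd_Suc[of m d 1] d(2) 2 by simp
    next
      case 3
      then have "n - 2*fib (2*m+2) < fib (2*m+1)" using n fa by linarith
      then obtain d where d: "valid m d" "restr m d" "val m d = n - 2*fib (2*m+2)" using Suc.IH by blast
      show ?thesis
        apply (rule exI[of _ "d(Suc m := 2)"])
        using valid_upd2[OF d(1,2)] val_upd_Suc[of m d 2] d(3) 3 by simp
    qed
  qed
  have P2: "\<exists>c. valid (Suc m) c \<and> restr (Suc m) c \<and> val (Suc m) c = n" if n: "n < fib (2 * Suc m + 1)" for n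
  proof -
    consider "n < fib (2*m+2)" | "fib (2*m+2) \<le> n" by linarith
    then show ?thesis
    proof cases
      case 1
      then obtain c where c: "valid m c" "val m c = n" using Suc.IH by blast
      show ?thesis using c valid_Suc[OF c(1)] valid_Suc_val[OF c(1)] restr_0[OF c(1)] by auto
    next
      case 2
      then have "n - fib (2*m+2) < fib (2*m+1)" using n fb by linarith
      then obtain d where d: "valid m d" "restr m d" "val m d = n - fib (2*m+2)" using Suc.IH by blast
      show ?thesis
        apply (rule exI[of _ "d(Suc m := 1)"])
        using valid_upd1[OF d(1)] restr_upd1[OF d(1,2)] val_upd_Suc[of m d 1] d(3) 2 by simp
    qed
  qed
  show ?case using P1 P2 by blast
qed

lemma valid_mono: assumes "valid m c" "m \<le> m'" shows "valid m' c \<and> val m' c = val m c"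
  using assms(2)
proof (induction m' rule: dec_induct)
  case base
  then show ?case using assms(1) by simp
next
  case (step n)
  then show ?case using valid_Suc valid_Suc_val by auto
qed

lemma valid_supp: "valid m c \<Longrightarrow> {i. c i \<noteq> 0} \<subseteq> {1..m}"
proof
  fix i assume v: "valid m c" and "i \<in> {i. c i \<noteq> 0}"
  then have ci: "c i \<noteq> 0" by simp
  have "i \<noteq> 0" using v ci unfolding valid_def by (cases i) auto
  moreover have "\<not> i > m" using v ci unfolding valid_def by auto
  ultimately show "i \<in> {1..m}" by simp
qed

lemma val_supp: "valid m c \<Longrightarrow> val m c = (\<Sum>i\<in>{i. c i \<noteq> 0}. c i * fib (2 * i))"
proof -
  assume v: "valid m c"
  have sub: "{i. c i \<noteq> 0} \<subseteq> {1..m}" using valid_supp[OF v] .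
  show ?thesis unfolding val_def
    by (rule sum.mono_neutral_right) (use sub in auto)
qed

lemma valid_CG: "valid m c \<Longrightarrow> is_CG_rep (val m c) c"
proof -
  assume v: "valid m c"
  have "finite {i. c i \<noteq> 0}" using valid_supp[OF v] finite_subset by blast
  then show ?thesis using v val_supp[OF v] unfolding is_CG_rep_def valid_def by blast
qed

lemma CG_valid: "is_CG_rep n c \<Longrightarrow> \<exists>m. valid m c \<and> val m c = n"
proof -
  assume r: "is_CG_rep n c"
  then have fin: "finite {i. c i \<noteq> 0}" unfolding is_CG_rep_def by blast
  then obtain m where m: "\<forall>i\<in>{i. c i \<noteq> 0}. i \<le> m" using finite_nat_set_iff_bounded_le by blast
  have z: "\<forall>i>m. c i = 0"
  proof (intro allI impI)
    fix i assume "m < i"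
    then show "c i = 0" using m by (meson mem_Collect_eq not_le)
  qed
  have v: "valid m c" unfolding valid_def
  proof (intro conjI)
    show "c 0 = 0" "\<forall>i. c i \<le> 2" using r unfolding is_CG_rep_def by blast+
    show "\<forall>i>m. c i = 0" by (rule z)
    show "\<forall>i j. i < j \<and> c i = 2 \<and> c j = 2 \<longrightarrow> (\<exists>l>i. l < j \<and> c l = 0)"
      using r unfolding is_CG_rep_def by blast
  qed
  have "n = (\<Sum>i\<in>{i. c i \<noteq> 0}. c i * fib (2 * i))" using r unfolding is_CG_rep_def by blast
  then show ?thesis using v val_supp[OF v] by auto
qed

lemma CG_coeff_eq: "valid m c \<Longrightarrow> CG_coeff (val m c) = c"
  unfolding CG_coeff_def
proof (rule the_equality)
  assume v: "valid m c"
  show "is_CG_rep (val m c) c" using valid_CG[OF v] .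
  fix d assume "is_CG_rep (val m c) d"
  then obtain m' where d: "valid m' d" "val m' d = val m c" using CG_valid by blast
  define M where "M = max m m'"
  have 1: "valid M c" "val M c = val m c" using valid_mono[OF v, of M] M_def by auto
  have 2: "valid M d" "val M d = val m' d" using valid_mono[OF d(1), of M] M_def by auto
  show "d = c" using uniq[OF 2(1) 1(1)] 1 2 d by simp
qed

lemma CG_coeff_valid: "n < fib (2*m+2) \<Longrightarrow> valid m (CG_coeff n) \<and> val m (CG_coeff n) = n"
proof -
  assume "n < fib (2*m+2)"
  then obtain c where c: "valid m c" "val m c = n" using exist[of m] by blast
  show ?thesis using c CG_coeff_eq[OF c(1)] by simp
qed

lemma CG_coeff_shift1: "n < fib (2*m+2) \<Longrightarrow> CG_coeff (fib (2*m+2) + n) = (CG_coeff n)(Suc m := 1)"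
proof -
  assume n: "n < fib (2*m+2)"
  have v: "valid m (CG_coeff n)" "val m (CG_coeff n) = n" using CG_coeff_valid[OF n] by auto
  have "CG_coeff (val (Suc m) ((CG_coeff n)(Suc m := 1))) = (CG_coeff n)(Suc m := 1)"
    using CG_coeff_eq valid_upd1[OF v(1)] by blast
  then show ?thesis using val_upd_Suc[of m "CG_coeff n" 1] v(2) by (simp add: add.commute)
qed

lemma CG_coeff_shift2: "n < fib (2*m+1) \<Longrightarrow> CG_coeff (2 * fib (2*m+2) + n) = (CG_coeff n)(Suc m := 2)"
proof -
  assume n: "n < fib (2*m+1)"
  then obtain d where d: "valid m d" "restr m d" "val m d = n" using exist[of m] by blast
  have cd: "CG_coeff n = d" using CG_coeff_eq[OF d(1)] d(3) by simp
  have "CG_coeff (val (Suc m) (d(Suc m := 2))) = d(Suc m := 2)"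
    using CG_coeff_eq valid_upd2[OF d(1,2)] by blast
  then show ?thesis using val_upd_Suc[of m d 2] d(3) cd by (simp add: add.commute)
qed



definition ind :: "nat \<Rightarrow> nat \<Rightarrow> bool" where
  "ind k n \<longleftrightarrow> n \<ge> 1 \<and> Min {i. CG_coeff n i \<noteq> 0} = k"

lemma CG_coeff_0: "CG_coeff 0 = (\<lambda>_. 0)"
proof -
  have v: "valid 0 (\<lambda>_. 0)" unfolding valid_def by simp
  have "val 0 (\<lambda>_. 0) = 0" unfolding val_def by simp
  then show ?thesis using CG_coeff_eq[OF v] by simp
qed

lemma supp_empty: "valid m c \<Longrightarrow> {i. c i \<noteq> 0} = {} \<Longrightarrow> val m c = 0"
  unfolding val_def by auto

lemma supp_fin: "valid m c \<Longrightarrow> finite {i. c i \<noteq> 0}"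
  using valid_supp finite_subset by blast

lemma Min_upd:
  assumes v: "valid m c" and nz: "v \<noteq> 0"
  shows "Min {i. (c(Suc m := v)) i \<noteq> 0} = (if val m c = 0 then Suc m else Min {i. c i \<noteq> 0})"
proof -
  have e: "{i. (c(Suc m := v)) i \<noteq> 0} = insert (Suc m) {i. c i \<noteq> 0}"
  proof -
    have "c (Suc m) = 0" using v unfolding valid_def by auto
    then show ?thesis using nz by auto
  qed
  show ?thesis
  proof (cases "val m c = 0")
    case True
    have "{i. c i \<noteq> 0} = {}"
    proof (rule ccontr)
      assume "{i. c i \<noteq> 0} \<noteq> {}"
      then obtain i where i: "c i \<noteq> 0" by auto
      then have "i \<in> {1..m}" using valid_supp[OF v] by auto
      then have "c i * fib (2*i) \<le> val m c" unfolding val_def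
        by (intro member_le_sum) auto
      moreover have "fib (2*i) > 0" using \<open>i \<in> {1..m}\<close> by (intro fib_neq_0_nat) auto
      ultimately show False using True i by simp
    qed
    then show ?thesis using e True by simp
  next
    case False
    define Sp where "Sp = {i. c i \<noteq> 0}"
    have ne: "Sp \<noteq> {}" using supp_empty[OF v] False Sp_def by blast
    have fin: "finite Sp" using supp_fin[OF v] Sp_def by simp
    have sub: "Sp \<subseteq> {1..m}" using valid_supp[OF v] Sp_def by simp
    have "Min Sp \<in> Sp" using Min_in[OF fin ne] .
    then have le: "Min Sp \<le> m" using sub by (meson atLeastAtMost_iff subsetD)
    have "Min (insert (Suc m) Sp) = min (Suc m) (Min Sp)" using Min_insert[OF fin ne] .
    also have "\<dots> = Min Sp" using le by simp
    finally have "Min (insert (Suc m) Sp) = Min Sp" .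
    then show ?thesis using e False unfolding Sp_def by simp
  qed
qed

lemma fib_pos2: "fib (2*m+2) \<ge> 1"
proof -
  have "0 < fib (2*m+2)" by (rule fib_neq_0_nat) simp
  then show ?thesis by linarith
qed

lemma ind_shift1:
  assumes n: "n < fib (2*m+2)"
  shows "ind k (fib (2*m+2) + n) = (if n = 0 then Suc m = k else ind k n)"
proof -
  have v: "valid m (CG_coeff n)" "val m (CG_coeff n) = n" using CG_coeff_valid[OF n] by auto
  have "Min {i. CG_coeff (fib (2*m+2) + n) i \<noteq> 0} = (if n = 0 then Suc m else Min {i. CG_coeff n i \<noteq> 0})"
    using Min_upd[OF v(1), of 1] v(2) CG_coeff_shift1[OF n] by simp
  then show ?thesis unfolding ind_def using fib_pos2[of m] by auto
qed

lemma ind_shift2: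
  assumes n: "n < fib (2*m+1)"
  shows "ind k (2 * fib (2*m+2) + n) = (if n = 0 then Suc m = k else ind k n)"
proof -
  have "fib (2*m+1) \<le> fib (2*m+2)" by (simp add: fib_mono)
  then have n': "n < fib (2*m+2)" using n by linarith
  have v: "valid m (CG_coeff n)" "val m (CG_coeff n) = n" using CG_coeff_valid[OF n'] by auto
  have "Min {i. CG_coeff (2 * fib (2*m+2) + n) i \<noteq> 0} = (if n = 0 then Suc m else Min {i. CG_coeff n i \<noteq> 0})"
    using Min_upd[OF v(1), of 2] v(2) CG_coeff_shift2[OF n] by simp
  then show ?thesis unfolding ind_def using fib_pos2[of m] by auto
qed

lemma ind_small:
  assumes n: "n < fib (2*m+2)" and mk: "m < k"
  shows "\<not> ind k n"
proof
  assume i: "ind k n"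
  have v: "valid m (CG_coeff n)" "val m (CG_coeff n) = n" using CG_coeff_valid[OF n] by auto
  have ne: "{i. CG_coeff n i \<noteq> 0} \<noteq> {}"
  proof
    assume "{i. CG_coeff n i \<noteq> 0} = {}"
    then have "val m (CG_coeff n) = 0" using supp_empty[OF v(1)] by blast
    then show False using v(2) i unfolding ind_def by simp
  qed
  have "Min {i. CG_coeff n i \<noteq> 0} \<in> {i. CG_coeff n i \<noteq> 0}" using Min_in[OF supp_fin[OF v(1)] ne] .
  then have "Min {i. CG_coeff n i \<noteq> 0} \<le> m" using valid_supp[OF v(1)] by auto
  then show False using i mk unfolding ind_def by simp
qed

lemma ind_0: "\<not> ind k 0" unfolding ind_def by simp

lemma n_lt_fib: "n < fib (2*n+2)"
proof (induction n)
  case 0 then show ?case by simp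
next
  case (Suc n)
  have "fib (2 * Suc n + 2) = fib (2*n+2) + fib (2*n+2) + fib (2*n+1)" by (rule fib_a)
  moreover have "fib (2*n+2) \<ge> 1" by (rule fib_pos2)
  ultimately show ?case using Suc.IH by linarith
qed

lemma fib2_strict: fixes a b :: nat assumes "1 \<le> a" "a < b" shows "fib (2*a) < fib (2*b)"
proof -
  have e: "fib (Suc (Suc (2*a - 1))) = fib (Suc (2*a-1)) + fib (2*a-1)" by (rule fib.simps(3))
  have "Suc (Suc (2*a - 1)) = 2*a+1" "Suc (2*a-1) = 2*a" using assms by auto
  then have "fib (2*a+1) = fib (2*a) + fib (2*a-1)" using e by simp
  moreover have "fib (2*a-1) > 0" using assms by (intro fib_neq_0_nat) auto
  moreover have "fib (2*a+1) \<le> fib (2*b)" using assms by (intro fib_mono) auto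
  ultimately show ?thesis by linarith
qed

lemma fib2_inj: fixes a b :: nat assumes "1 \<le> a" "1 \<le> b" "fib (2*a) = fib (2*b)" shows "a = b"
proof (rule ccontr)
  assume "a \<noteq> b"
  then consider "a < b" | "b < a" by linarith
  then show False
  proof cases
    case 1 then show False using fib2_strict[OF assms(1) 1] assms(3) by simp
  next
    case 2 then show False using fib2_strict[OF assms(2) 2] assms(3) by simp
  qed
qed

lemma A2k_ind: assumes k: "1 \<le> k" shows "A2k k = {n. ind k n}"
proof (intro set_eqI iffI)
  fix n :: nat
  {
    assume n1: "n \<ge> 1"
    have nl: "n < fib (2*n+2)" by (rule n_lt_fib)
    have v: "valid n (CG_coeff n)" "val n (CG_coeff n) = n" using CG_coeff_valid[OF nl] by auto
    define Sp where "Sp = {i. CG_coeff n i \<noteq> 0}"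
    have fin: "finite Sp" using supp_fin[OF v(1)] Sp_def by simp
    have ne: "Sp \<noteq> {}" using supp_empty[OF v(1)] v(2) n1 Sp_def by auto
    have sub: "Sp \<subseteq> {1..n}" using valid_supp[OF v(1)] Sp_def by simp
    have ss: "{i. i \<ge> 1 \<and> CG_coeff n i \<noteq> 0} = Sp" using sub unfolding Sp_def by auto
    have cg: "CG n = (\<lambda>i. fib (2*i)) ` Sp"
      unfolding CG_def setcompr_eq_image ss by simp
    have mono: "mono (\<lambda>i::nat. fib (2*i))" by (intro monoI fib_mono) simp
    have mn: "Min (CG n) = fib (2 * Min Sp)" using mono_Min_commute[OF mono fin ne] cg by simp
    have m1: "Min Sp \<ge> 1" using Min_in[OF fin ne] sub by auto
    have "Min (CG n) = fib (2*k) \<longleftrightarrow> Min Sp = k"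
    proof
      assume "Min (CG n) = fib (2*k)"
      then show "Min Sp = k" using mn fib2_inj[OF m1 k] by simp
    next
      assume "Min Sp = k"
      then show "Min (CG n) = fib (2*k)" using mn by simp
    qed
    then have "n \<in> A2k k \<longleftrightarrow> ind k n" unfolding A2k_def ind_def Sp_def using n1 by simp
  }
  note * = this
  show "n \<in> A2k k \<Longrightarrow> n \<in> {n. ind k n}" using * unfolding A2k_def by auto
  show "n \<in> {n. ind k n} \<Longrightarrow> n \<in> A2k k" using * unfolding ind_def by auto
qed



fun blen :: "nat \<Rightarrow> letter \<Rightarrow> nat" where
  "blen k A = fib (2*k)" | "blen k B = fib (2*k+1)"

definition bl :: "nat \<Rightarrow> bool list" where "bl l = True # replicate (l - 1) False"

definition D :: "nat \<Rightarrow> letter list \<Rightarrow> bool list" where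
  "D k ws = replicate (fib (2*k)) False @ concat (map (\<lambda>x. bl (blen k x)) ws) @ bl (fib (2*k-1))"

lemma fib_odd_split: assumes "k \<ge> 1" shows "fib (2*k+1) = fib (2*k) + fib (2*k-1)"
proof -
  have e: "fib (Suc (Suc (2*k - 1))) = fib (Suc (2*k-1)) + fib (2*k-1)" by (rule fib.simps(3))
  have "Suc (Suc (2*k - 1)) = 2*k+1" "Suc (2*k-1) = 2*k" using assms by auto
  then show ?thesis using e by simp
qed

lemma fib_odd_pos: assumes "k \<ge> 1" shows "fib (2*k-1) \<ge> 1"
proof -
  have "fib (2*k-1) > 0" using assms by (intro fib_neq_0_nat) auto
  then show ?thesis by linarith
qed

lemma fib_even_pos: assumes "k \<ge> 1" shows "fib (2*k) \<ge> 1"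
proof -
  have "fib (2*k) > 0" using assms by (intro fib_neq_0_nat) auto
  then show ?thesis by linarith
qed

lemma blB: assumes "k \<ge> 1" shows "bl (fib (2*k-1)) @ replicate (fib (2*k)) False = bl (blen k B)"
proof -
  have "fib (2*k-1) - 1 + fib (2*k) = fib (2*k+1) - 1"
    using fib_odd_split[OF assms] fib_odd_pos[OF assms] by linarith
  then show ?thesis unfolding bl_def by (simp add: replicate_add[symmetric])
qed

lemma D_app: assumes "k \<ge> 1" shows "D k u @ D k v = D k (u @ [B] @ v)"
proof -
  have "D k u @ D k v = replicate (fib (2*k)) False @ concat (map (\<lambda>x. bl (blen k x)) u)
     @ (bl (fib (2*k-1)) @ replicate (fib (2*k)) False) @ concat (map (\<lambda>x. bl (blen k x)) v) @ bl (fib (2*k-1))"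
    unfolding D_def by simp
  also have "\<dots> = D k (u @ [B] @ v)" unfolding blB[OF assms] D_def by simp
  finally show ?thesis .
qed

fun PQ :: "nat \<Rightarrow> letter list \<times> letter list" where
  "PQ 0 = ([A], [])"
| "PQ (Suc i) = (fst (PQ i) @ [B] @ fst (PQ i) @ [B] @ snd (PQ i), fst (PQ i) @ [B] @ snd (PQ i))"

definition W :: "nat \<Rightarrow> nat \<Rightarrow> bool list" where "W k m = map (ind k) [0..<fib (2*m+2)]"
definition U :: "nat \<Rightarrow> nat \<Rightarrow> bool list" where "U k m = map (ind k) [0..<fib (2*m+1)]"

lemma map_split: "map f [0..<a+b] = map f [0..<a] @ map (\<lambda>n. f (a+n)) [0..<b]"
  by (rule nth_equalityI) (auto simp: nth_append)

lemma map_head: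
  assumes "b \<ge> 1" "\<And>n. 1 \<le> n \<Longrightarrow> n < b \<Longrightarrow> g n = f n"
  shows "map g [0..<b] = g 0 # tl (map f [0..<b])"
proof (rule nth_equalityI)
  show "length (map g [0..<b]) = length (g 0 # tl (map f [0..<b]))" using assms by simp
next
  fix i assume "i < length (map g [0..<b])"
  then have i: "i < b" by simp
  show "map g [0..<b] ! i = (g 0 # tl (map f [0..<b])) ! i"
  proof (cases i)
    case 0 then show ?thesis using i by simp
  next
    case (Suc j)
    then show ?thesis using i assms(2)[of i] by (simp add: nth_tl)
  qed
qed

lemma W_Suc: "W k (Suc m) = W k m @ ((Suc m = k) # tl (W k m)) @ ((Suc m = k) # tl (U k m))"
proof -
  define F where "F = fib (2*m+2)"
  define G where "G = fib (2*m+1)"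
  have F1: "F \<ge> 1" using fib_pos2 F_def by simp
  have G1: "G \<ge> 1" unfolding G_def using fib_neq_0_nat[of "2*m+1"] by simp
  have e: "fib (2 * Suc m + 2) = F + (F + G)" using fib_a[of m] F_def G_def by simp
  have s1: "\<And>n. n < F \<Longrightarrow> ind k (F + n) = (if n = 0 then Suc m = k else ind k n)"
    using ind_shift1[of _ m k, folded F_def] .
  have s2: "\<And>n. n < G \<Longrightarrow> ind k (2 * F + n) = (if n = 0 then Suc m = k else ind k n)"
    using ind_shift2[of _ m k, folded F_def G_def] .
  have 1: "map (\<lambda>n. ind k (F+n)) [0..<F] = (Suc m = k) # tl (map (ind k) [0..<F])"
  proof -
    have "map (\<lambda>n. ind k (F+n)) [0..<F] = ind k (F+0) # tl (map (ind k) [0..<F])"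
      by (rule map_head[OF F1]) (use s1 in auto)
    moreover have "ind k (F+0) = (Suc m = k)" using s1[of 0] F1 by simp
    ultimately show ?thesis by simp
  qed
  have 2: "map (\<lambda>n. ind k (F+(F+n))) [0..<G] = (Suc m = k) # tl (map (ind k) [0..<G])"
  proof -
    have a: "ind k (F+(F+n)) = (if n = 0 then Suc m = k else ind k n)" if "n < G" for n
    proof -
      have "ind k (F+(F+n)) = ind k (2*F+n)" by (rule arg_cong[where f="ind k"]) simp
      also have "\<dots> = (if n = 0 then Suc m = k else ind k n)" by (rule s2[OF that])
      finally show ?thesis .
    qed
    have "map (\<lambda>n. ind k (F+(F+n))) [0..<G] = ind k (F+(F+0)) # tl (map (ind k) [0..<G])"
      by (rule map_head[OF G1]) (use a in auto)
    moreover have "ind k (F+(F+0)) = (Suc m = k)" using a[of 0] G1 by simp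
    ultimately show ?thesis by simp
  qed
  have wm: "W k m = map (ind k) [0..<F]" unfolding W_def F_def ..
  have um: "U k m = map (ind k) [0..<G]" unfolding U_def G_def ..
  have "W k (Suc m) = map (ind k) [0..<F + (F + G)]" unfolding W_def e ..
  also have "\<dots> = map (ind k) [0..<F] @ map (\<lambda>n. ind k (F+n)) [0..<F] @ map (\<lambda>n. ind k (F+(F+n))) [0..<G]"
    unfolding map_split by simp
  also have "\<dots> = W k m @ ((Suc m = k) # tl (W k m)) @ ((Suc m = k) # tl (U k m))"
    unfolding 1 2 wm um ..
  finally show ?thesis .
qed

lemma U_Suc: "U k (Suc m) = W k m @ ((Suc m = k) # tl (U k m))"
proof -
  define F where "F = fib (2*m+2)"
  define G where "G = fib (2*m+1)"
  have G1: "G \<ge> 1" unfolding G_def using fib_neq_0_nat[of "2*m+1"] by simp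
  have GF: "G \<le> F" unfolding F_def G_def by (rule fib_mono) simp
  have e: "fib (2 * Suc m + 1) = F + G" using fib_b[of m] F_def G_def by simp
  have s1: "\<And>n. n < F \<Longrightarrow> ind k (F + n) = (if n = 0 then Suc m = k else ind k n)"
    using ind_shift1[of _ m k, folded F_def] .
  have 1: "map (\<lambda>n. ind k (F+n)) [0..<G] = (Suc m = k) # tl (map (ind k) [0..<G])"
  proof -
    have a: "ind k (F+n) = (if n = 0 then Suc m = k else ind k n)" if "n < G" for n
      using s1[of n] that GF by simp
    have "map (\<lambda>n. ind k (F+n)) [0..<G] = ind k (F+0) # tl (map (ind k) [0..<G])"
      by (rule map_head[OF G1]) (use a in auto)
    moreover have "ind k (F+0) = (Suc m = k)" using a[of 0] G1 by simp
    ultimately show ?thesis by simp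
  qed
  have wm: "W k m = map (ind k) [0..<F]" unfolding W_def F_def ..
  have um: "U k m = map (ind k) [0..<G]" unfolding U_def G_def ..
  have "U k (Suc m) = map (ind k) [0..<F + G]" unfolding U_def e ..
  also have "\<dots> = map (ind k) [0..<F] @ map (\<lambda>n. ind k (F+n)) [0..<G]"
    unfolding map_split by simp
  also have "\<dots> = W k m @ ((Suc m = k) # tl (U k m))"
    unfolding 1 wm um ..
  finally show ?thesis .
qed

lemma W_small: assumes "m < k" shows "W k m = replicate (fib (2*m+2)) False"
proof -
  define F where "F = fib (2*m+2)"
  have s: "\<And>n. n < F \<Longrightarrow> \<not> ind k n" using ind_small[OF _ assms, folded F_def] .
  have "map (ind k) [0..<F] = replicate F False"
    by (rule nth_equalityI) (use s in auto)
  then show ?thesis unfolding W_def F_def .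
qed

lemma U_small: assumes "m < k" shows "U k m = replicate (fib (2*m+1)) False"
proof -
  define F where "F = fib (2*m+2)"
  define G where "G = fib (2*m+1)"
  have GF: "G \<le> F" unfolding F_def G_def by (rule fib_mono) simp
  have s: "\<And>n. n < F \<Longrightarrow> \<not> ind k n" using ind_small[OF _ assms, folded F_def] .
  have "map (ind k) [0..<G] = replicate G False"
    by (rule nth_equalityI) (use s GF in auto)
  then show ?thesis unfolding U_def G_def .
qed

lemma D_hd: assumes "k \<ge> 1" shows "False # tl (D k ws) = D k ws"
proof -
  have "fib (2*k) \<noteq> 0" using fib_even_pos[OF assms] by linarith
  then obtain r where "fib (2*k) = Suc r" using not0_implies_Suc by blast
  then show ?thesis unfolding D_def by simp
qed

lemma W_D: assumes k: "k \<ge> 1"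
  shows "W k (k+i) = D k (fst (PQ i)) \<and> U k (k+i) = D k (snd (PQ i))"
proof (induction i)
  case 0
  obtain k' where k': "k = Suc k'" using k by (metis Suc_le_D One_nat_def)
  have w: "W k k' = replicate (fib (2*k)) False" using W_small[of k' k] k' by simp
  have u: "U k k' = replicate (fib (2*k-1)) False"
  proof -
    have "2*k' + 1 = 2*k - 1" using k' by simp
    then show ?thesis using U_small[of k' k] k' by simp
  qed
  have "W k k = W k k' @ (True # tl (W k k')) @ (True # tl (U k k'))"
    using W_Suc[of k k'] k' by simp
  also have "\<dots> = D k (fst (PQ 0))" unfolding w u D_def bl_def by simp
  finally have 1: "W k (k+0) = D k (fst (PQ 0))" by simp
  have "U k k = W k k' @ (True # tl (U k k'))"
    using U_Suc[of k k'] k' by simp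
  also have "\<dots> = D k (snd (PQ 0))" unfolding w u D_def bl_def by simp
  finally have 2: "U k (k+0) = D k (snd (PQ 0))" by simp
  show ?case using 1 2 by simp
next
  case (Suc i)
  have ne: "Suc (k+i) \<noteq> k" by simp
  have "W k (k + Suc i) = W k (k+i) @ (False # tl (W k (k+i))) @ (False # tl (U k (k+i)))"
    using W_Suc[of k "k+i"] ne by simp
  also have "\<dots> = D k (fst (PQ i)) @ D k (fst (PQ i)) @ D k (snd (PQ i))"
    using Suc.IH D_hd[OF k] by simp
  also have "\<dots> = D k (fst (PQ (Suc i)))" using D_app[OF k] by simp
  finally have 1: "W k (k + Suc i) = D k (fst (PQ (Suc i)))" .
  have "U k (k + Suc i) = W k (k+i) @ (False # tl (U k (k+i)))"
    using U_Suc[of k "k+i"] ne by simp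
  also have "\<dots> = D k (fst (PQ i)) @ D k (snd (PQ i))"
    using Suc.IH D_hd[OF k] by simp
  also have "\<dots> = D k (snd (PQ (Suc i)))" using D_app[OF k] by simp
  finally have 2: "U k (k + Suc i) = D k (snd (PQ (Suc i)))" .
  show ?case using 1 2 by simp
qed



lemma S_rec: "n \<ge> 1 \<Longrightarrow> S (n+2) = S (n+1) @ S n"
  by (cases n) auto

lemma S_swap: "n \<ge> 1 \<Longrightarrow> \<exists>u x y. S n @ S (Suc n) = u @ [x,y] \<and> S (Suc n) @ S n = u @ [y,x]"
proof (induction n rule: nat_induct_at_least)
  case base
  show ?case by (intro exI[of _ "[B]"] exI[of _ B] exI[of _ A]) (simp add: numeral_2_eq_2)
next
  case (Suc n)
  then obtain u x y where h: "S n @ S (Suc n) = u @ [x,y]" "S (Suc n) @ S n = u @ [y,x]" by blast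
  have r: "S (Suc (Suc n)) = S (Suc n) @ S n" using S_rec[OF Suc.hyps] by simp
  have "S (Suc n) @ S (Suc (Suc n)) = (S (Suc n) @ u) @ [y,x]" using r h(2) by simp
  moreover have "S (Suc (Suc n)) @ S (Suc n) = (S (Suc n) @ u) @ [x,y]" using r h(1) by simp
  ultimately show ?case by blast
qed

lemma app2_inj: "xs @ [a,b] = ys @ [c,d] \<Longrightarrow> xs = ys \<and> a = c \<and> b = d"
proof -
  assume h: "xs @ [a,b] = ys @ [c,d]"
  then have "rev (xs @ [a,b]) = rev (ys @ [c,d])" by simp
  then show ?thesis by simp
qed

lemma PQ_S: "fst (PQ i) @ [B,A] = A # S (2*i+2) \<and> snd (PQ i) @ [A,B] = A # S (2*i+1)"
proof (induction i)
  case 0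
  show ?case by (simp add: numeral_2_eq_2)
next
  case (Suc i)
  define p where "p = fst (PQ i)"
  define q where "q = snd (PQ i)"
  have H1: "p @ [B,A] = A # S (2*i+2)" and H2: "q @ [A,B] = A # S (2*i+1)"
    using Suc.IH p_def q_def by auto
  obtain u x y where sw: "S (2*i+1) @ S (Suc (2*i+1)) = u @ [x,y]" "S (Suc (2*i+1)) @ S (2*i+1) = u @ [y,x]"
    using S_swap[of "2*i+1"] by auto
  have e2: "Suc (2*i+1) = 2*i+2" by simp
  have r3: "S (2*i+3) = S (2*i+2) @ S (2*i+1)" using S_rec[of "2*i+1"] by (simp add: numeral_3_eq_3 add.assoc)
  have r4: "S (2*i+4) = S (2*i+3) @ S (2*i+2)"
  proof -
    have a: "S (2*i+4) = S ((2*i+2)+2)" by (rule arg_cong[where f=S]) simp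
    have b: "S ((2*i+2)+1) = S (2*i+3)" by (rule arg_cong[where f=S]) simp
    have c: "S ((2*i+2)+2) = S ((2*i+2)+1) @ S (2*i+2)" by (rule S_rec) simp
    show ?thesis by (simp only: a b c)
  qed
  have "A # S (2*i+2) @ S (2*i+1) = (A # S (2*i+2)) @ S (2*i+1)" by simp
  also have "\<dots> = (p @ [B,A]) @ S (2*i+1)" unfolding H1 ..
  also have "\<dots> = p @ [B] @ (A # S (2*i+1))" by simp
  also have "\<dots> = (p @ [B] @ q) @ [A,B]" using H2 by simp
  finally have "A # u @ [y,x] = (p @ [B] @ q) @ [A,B]" using sw(2) e2 by simp
  then have "(A # u) @ [y,x] = (p @ [B] @ q) @ [A,B]" by simp
  from app2_inj[OF this] have uu: "A # u = p @ [B] @ q" "y = A" "x = B" by simp_all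
  have g2: "snd (PQ (Suc i)) @ [A,B] = A # S (2*i+3)"
  proof -
    have "snd (PQ (Suc i)) @ [A,B] = p @ [B] @ (q @ [A,B])" using p_def q_def by simp
    also have "\<dots> = p @ [B] @ (A # S (2*i+1))" using H2 by simp
    also have "\<dots> = (p @ [B,A]) @ S (2*i+1)" by simp
    also have "\<dots> = A # S (2*i+3)" using H1 r3 by simp
    finally show ?thesis .
  qed
  have g1: "fst (PQ (Suc i)) @ [B,A] = A # S (2*i+4)"
  proof -
    have "A # S (2*i+4) = (A # S (2*i+2)) @ (S (2*i+1) @ S (2*i+2))" using r4 r3 by simp
    also have "\<dots> = (p @ [B,A]) @ (u @ [B,A])" using H1 sw(1) e2 uu by simp
    also have "\<dots> = p @ [B] @ (A # u) @ [B,A]" by simp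
    also have "\<dots> = p @ [B] @ p @ [B] @ q @ [B,A]" using uu by simp
    also have "\<dots> = fst (PQ (Suc i)) @ [B,A]" using p_def q_def by simp
    finally show ?thesis by simp
  qed
  have e1: "2 * Suc i + 2 = 2*i+4" and e3: "2 * Suc i + 1 = 2*i+3" by simp_all
  show ?case unfolding e1 e3 using g1 g2 by (rule conjI)
qed



lemma len_bl: "l \<ge> 1 \<Longrightarrow> length (bl l) = l" unfolding bl_def by simp

lemma len_blocks: "(\<forall>l\<in>set ls. l \<ge> 1) \<Longrightarrow> length (concat (map bl ls)) = sum_list ls"
  by (induction ls) (auto simp: len_bl)

lemma nth_blocks: "(\<forall>l\<in>set ls. l \<ge> 1) \<Longrightarrow> n < sum_list ls \<Longrightarrow>
   (concat (map bl ls) ! n \<longleftrightarrow> (\<exists>j<length ls. n = sum_list (take j ls)))"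
proof (induction ls arbitrary: n)
  case Nil then show ?case by simp
next
  case (Cons l ls)
  have l1: "l \<ge> 1" using Cons.prems by simp
  show ?case
  proof (cases "n < l")
    case True
    have "concat (map bl (l # ls)) ! n = bl l ! n" using True len_bl[OF l1] by (simp add: nth_append)
    also have "\<dots> = (n = 0)" unfolding bl_def using True by (cases n) auto
    finally have lhs: "concat (map bl (l # ls)) ! n = (n = 0)" .
    have "(\<exists>j<length (l#ls). n = sum_list (take j (l#ls))) \<longleftrightarrow> n = 0"
    proof
      assume "\<exists>j<length (l#ls). n = sum_list (take j (l#ls))"
      then obtain j where j: "n = sum_list (take j (l#ls))" by blast
      show "n = 0"
      proof (cases j)
        case 0 then show ?thesis using j by simp
      next
        case (Suc j') then have "n \<ge> l" using j by simp
        then show ?thesis using True by simp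
      qed
    next
      assume "n = 0" then show "\<exists>j<length (l#ls). n = sum_list (take j (l#ls))"
        by (intro exI[of _ 0]) simp
    qed
    then show ?thesis using lhs by simp
  next
    case False
    have nl: "n - l < sum_list ls" using Cons.prems False by simp
    have "concat (map bl (l # ls)) ! n = concat (map bl ls) ! (n - l)"
      using False len_bl[OF l1] by (simp add: nth_append)
    also have "\<dots> \<longleftrightarrow> (\<exists>j<length ls. n - l = sum_list (take j ls))"
      using Cons.IH[OF _ nl] Cons.prems by simp
    also have "\<dots> \<longleftrightarrow> (\<exists>j<length (l#ls). n = sum_list (take j (l#ls)))"
    proof
      assume "\<exists>j<length ls. n - l = sum_list (take j ls)"
      then obtain j where "j < length ls" "n - l = sum_list (take j ls)" by blast
      then show "\<exists>j<length (l#ls). n = sum_list (take j (l#ls))"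
        using False by (intro exI[of _ "Suc j"]) simp
    next
      assume "\<exists>j<length (l#ls). n = sum_list (take j (l#ls))"
      then obtain j where j: "j < length (l#ls)" "n = sum_list (take j (l#ls))" by blast
      show "\<exists>j<length ls. n - l = sum_list (take j ls)"
      proof (cases j)
        case 0 then show ?thesis using j False l1 by simp
      next
        case (Suc j') then show ?thesis using j by (intro exI[of _ j']) simp
      qed
    qed
    finally show ?thesis .
  qed
qed

lemma blen_pos: "k \<ge> 1 \<Longrightarrow> blen k x \<ge> 1"
proof (cases x)
  case A
  assume "k \<ge> 1" then show ?thesis using A fib_even_pos by simp
next
  case B
  assume "k \<ge> 1"
  have "fib (2*k+1) > 0" by (rule fib_neq_0_nat) simp
  then show ?thesis using B by simp
qed

lemma D_blocks: "D k ws = replicate (fib (2*k)) False @ concat (map bl (map (blen k) ws @ [fib (2*k-1)]))"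
  unfolding D_def by (simp add: o_def)

lemma D_nth:
  assumes k: "k \<ge> 1" and n: "n < length (D k ws)"
  shows "D k ws ! n \<longleftrightarrow> (\<exists>j \<le> length ws. n = fib (2*k) + sum_list (take j (map (blen k) ws)))"
proof -
  define F where "F = fib (2*k)"
  define ls where "ls = map (blen k) ws @ [fib (2*k-1)]"
  have pos: "\<forall>l\<in>set ls. l \<ge> 1" unfolding ls_def using blen_pos[OF k] fib_odd_pos[OF k] by auto
  have D: "D k ws = replicate F False @ concat (map bl ls)" unfolding D_blocks F_def ls_def ..
  have len: "length (D k ws) = F + sum_list ls" unfolding D using len_blocks[OF pos] by simp
  have tk: "take j ls = take j (map (blen k) ws)" if "j \<le> length ws" for j
    unfolding ls_def using that by simp
  show ?thesis
  proof (cases "n < F")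
    case True
    have "D k ws ! n = False" unfolding D using True by (simp add: nth_append)
    then show ?thesis using True F_def by auto
  next
    case False
    have nl: "n - F < sum_list ls" using n len False by simp
    have "D k ws ! n = concat (map bl ls) ! (n - F)" unfolding D using False by (simp add: nth_append)
    also have "\<dots> \<longleftrightarrow> (\<exists>j<length ls. n - F = sum_list (take j ls))" by (rule nth_blocks[OF pos nl])
    also have "\<dots> \<longleftrightarrow> (\<exists>j \<le> length ws. n = F + sum_list (take j (map (blen k) ws)))"
    proof
      assume "\<exists>j<length ls. n - F = sum_list (take j ls)"
      then obtain j where j: "j < length ls" "n - F = sum_list (take j ls)" by blast
      then have "j \<le> length ws" unfolding ls_def by simp
      then show "\<exists>j \<le> length ws. n = F + sum_list (take j (map (blen k) ws))"
        using j tk False by (intro exI[of _ j]) simp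
    next
      assume "\<exists>j \<le> length ws. n = F + sum_list (take j (map (blen k) ws))"
      then obtain j where j: "j \<le> length ws" "n = F + sum_list (take j (map (blen k) ws))" by blast
      then show "\<exists>j<length ls. n - F = sum_list (take j ls)"
        using tk unfolding ls_def by (intro exI[of _ j]) simp
    qed
    finally show ?thesis unfolding F_def .
  qed
qed

lemma D_len: "k \<ge> 1 \<Longrightarrow> length (D k ws) = fib (2*k) + sum_list (map (blen k) ws) + fib (2*k-1)"
proof -
  assume k: "k \<ge> 1"
  have pos: "\<forall>l\<in>set (map (blen k) ws @ [fib (2*k-1)]). l \<ge> 1" using blen_pos[OF k] fib_odd_pos[OF k] by auto
  show ?thesis unfolding D_blocks using len_blocks[OF pos] by simp
qed

lemma S_prefix_Suc: "\<exists>zs. S (Suc n) = S n @ zs"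
proof (cases n)
  case 0 then show ?thesis by simp
next
  case (Suc m) then show ?thesis by (cases m) auto
qed

lemma S_prefix: "m \<le> n \<Longrightarrow> \<exists>zs. S n = S m @ zs"
proof (induction n rule: dec_induct)
  case base then show ?case by simp
next
  case (step n)
  then obtain zs where "S n = S m @ zs" by blast
  moreover obtain ys where "S (Suc n) = S n @ ys" using S_prefix_Suc by blast
  ultimately show ?case by auto
qed

lemma golden_eq: assumes "1 \<le> t" "t \<le> length (S N)" shows "golden t = S N ! (t - 1)"
proof -
  define L where "L = (LEAST n. t \<le> length (S n))"
  have tL: "t \<le> length (S L)" unfolding L_def by (rule LeastI[of _ N]) (rule assms(2))
  have LN: "L \<le> N" unfolding L_def by (rule Least_le) (rule assms(2))
  obtain zs where "S N = S L @ zs" using S_prefix[OF LN] by blast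
  moreover have "t - 1 < length (S L)" using tL assms(1) by simp
  ultimately have "S N ! (t - 1) = S L ! (t - 1)" by (simp add: nth_append)
  then show ?thesis unfolding golden_def L_def by simp
qed

definition gg :: "nat \<Rightarrow> letter" where "gg t = (if t = 0 then A else golden t)"
definition pp :: "nat \<Rightarrow> nat \<Rightarrow> nat" where "pp k j = fib (2*k) + (\<Sum>t<j. blen k (gg t))"

lemma P_gg: assumes t: "t < length (fst (PQ i))" shows "fst (PQ i) ! t = gg t"
proof -
  have h: "fst (PQ i) @ [B,A] = A # S (2*i+2)" using PQ_S by blast
  have "fst (PQ i) ! t = (fst (PQ i) @ [B,A]) ! t" using t by (simp add: nth_append)
  also have "\<dots> = (A # S (2*i+2)) ! t" unfolding h ..
  finally have e: "fst (PQ i) ! t = (A # S (2*i+2)) ! t" .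
  have len: "length (S (2*i+2)) = length (fst (PQ i)) + 1"
    using arg_cong[OF h, of length] by simp
  show ?thesis
  proof (cases t)
    case 0 then show ?thesis using e unfolding gg_def by simp
  next
    case (Suc t')
    have "golden t = S (2*i+2) ! (t - 1)" by (rule golden_eq) (use Suc len t in auto)
    then show ?thesis using e Suc unfolding gg_def by simp
  qed
qed

lemma len_P: "Suc i \<le> length (fst (PQ i))"
  by (induction i) auto

lemma sum_take:
  assumes "j \<le> length ws" "\<forall>t<length ws. ws ! t = gg t"
  shows "sum_list (take j (map (blen k) ws)) = (\<Sum>t<j. blen k (gg t))"
  using assms(1)
proof (induction j)
  case 0 then show ?case by simp
next
  case (Suc j)
  then have jl: "j < length ws" by simp
  have "take (Suc j) (map (blen k) ws) = take j (map (blen k) ws) @ [blen k (ws ! j)]"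
    using jl by (simp add: take_Suc_conv_app_nth)
  then show ?case using Suc jl assms(2) by simp
qed

lemma ind_pp: assumes k: "k \<ge> 1" shows "ind k n \<longleftrightarrow> (\<exists>j. n = pp k j)"
proof
  assume i: "ind k n"
  define P where "P = fst (PQ n)"
  have gP: "\<forall>t<length P. P ! t = gg t" using P_gg P_def by blast
  have "n < fib (2*n+2)" by (rule n_lt_fib)
  also have "\<dots> \<le> fib (2*(k+n)+2)" by (rule fib_mono) simp
  finally have nl: "n < fib (2*(k+n)+2)" .
  have W: "W k (k+n) = D k P" using W_D[OF k] P_def by blast
  have lenD: "n < length (D k P)" using nl unfolding W[symmetric] W_def by simp
  have "D k P ! n = ind k n" unfolding W[symmetric] W_def using nl by simp
  then have "D k P ! n" using i by simp
  then obtain j where j: "j \<le> length P" "n = fib (2*k) + sum_list (take j (map (blen k) P))"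
    using D_nth[OF k lenD] by blast
  then have "n = pp k j" unfolding pp_def using sum_take[OF j(1) gP] by simp
  then show "\<exists>j. n = pp k j" by blast
next
  assume "\<exists>j. n = pp k j"
  then obtain j where nj: "n = pp k j" by blast
  define P where "P = fst (PQ j)"
  have gP: "\<forall>t<length P. P ! t = gg t" using P_gg P_def by blast
  have jP: "j \<le> length P" using len_P[of j] P_def by simp
  have n: "n = fib (2*k) + sum_list (take j (map (blen k) P))"
    unfolding nj pp_def using sum_take[OF jP gP] by simp
  have "sum_list (take j (map (blen k) P)) \<le> sum_list (map (blen k) P)"
  proof -
    have "sum_list (map (blen k) P) = sum_list (take j (map (blen k) P)) + sum_list (drop j (map (blen k) P))"
      by (simp flip: sum_list_append)
    then show ?thesis by simp
  qed
  moreover have "fib (2*k-1) \<ge> 1" by (rule fib_odd_pos[OF k])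
  ultimately have lenD: "n < length (D k P)" using D_len[OF k, of P] n by simp
  have "D k P ! n" using D_nth[OF k lenD] jP n by blast
  have W: "W k (k+j) = D k P" using W_D[OF k] P_def by blast
  have nl: "n < fib (2*(k+j)+2)" using lenD unfolding W[symmetric] W_def by simp
  have "D k P ! n = ind k n" unfolding W[symmetric] W_def using nl by simp
  then show "ind k n" using \<open>D k P ! n\<close> by simp
qed

lemma pp_Suc: "pp k (Suc j) = pp k j + blen k (gg j)" unfolding pp_def by simp

lemma pp_mono: assumes k: "k \<ge> 1" shows "strict_mono (pp k)"
  unfolding strict_mono_Suc_iff
proof
  fix n
  have "blen k (gg n) \<ge> 1" by (rule blen_pos[OF k])
  then show "pp k n < pp k (Suc n)" using pp_Suc[of k n] by simp
qed

lemma enum_strict: assumes sm: "strict_mono (f :: nat \<Rightarrow> nat)" shows "enumerate (range f) n = f n"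
proof (induction n)
  case 0
  show ?case unfolding enumerate_0
    by (rule Least_equality) (auto simp: strict_mono_less_eq[OF sm])
next
  case (Suc n)
  have inf: "infinite (range f)" using range_inj_infinite strict_mono_imp_inj_on[OF sm] by blast
  show ?case unfolding enumerate_Suc''[OF inf] Suc.IH
  proof (rule Least_equality)
    show "f (Suc n) \<in> range f \<and> f n < f (Suc n)" using sm by (simp add: strict_mono_less)
  next
    fix y assume "y \<in> range f \<and> f n < y"
    then obtain x where x: "y = f x" "f n < f x" by blast
    then have "n < x" using strict_mono_less[OF sm] by blast
    then show "f (Suc n) \<le> y" using x strict_mono_less_eq[OF sm] by simp
  qed
qed

theorem lemma4p2:
  fixes k j :: nat
  assumes "k \<ge> 1" and "j \<ge> 2"
  shows "int (q k (j + 1)) - int (q k j) =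
           (if golden (j - 1) = A then int (fib (2 * k)) else int (fib (2 * k + 1)))"
proof -
  have R: "A2k k = range (pp k)" using A2k_ind[OF assms(1)] ind_pp[OF assms(1)] by auto
  have E: "\<And>n. enumerate (A2k k) n = pp k n" unfolding R by (rule enum_strict[OF pp_mono[OF assms(1)]])
  have j: "j = Suc (j - 1)" using assms(2) by simp
  have q1: "q k (j+1) = pp k j" unfolding q_def E by simp
  have q2: "q k j = pp k (j-1)" unfolding q_def E ..
  have "pp k j = pp k (j-1) + blen k (gg (j-1))" using pp_Suc[of k "j-1"] j by simp
  moreover have "gg (j-1) = golden (j-1)" unfolding gg_def using assms(2) by simp
  ultimately have "int (q k (j + 1)) - int (q k j) = int (blen k (golden (j-1)))" using q1 q2 by simp
  then show ?thesis by (cases "golden (j-1)") auto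
qed


end
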